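(* Let $M^2$ be a strongly regular minimal surface of general type in $\mathbb R^4$, parameterized by semi-canonical parameters $(u,v)$, with invariants $\mu,\nu$. Then the function $E\sqrt{|\mu^2-\nu^2|}$ does not depend on $v$, and the function $G\sqrt{|\mu^2-\nu^2|}$ does not depend on $u$.
   Context: $\mathbb R^4$ carries the standard metric $g=\langle\cdot,\cdot\rangle$ and flat connection $\nabla'$; everything is smooth and local. For a regular surface $M^2: z=z(u,v)$ let $E,F,G$ be the first fundamental form coefficients, $\sigma$ the second fundamental form, $K$ the Gauss curvature, and $\varkappa$ the curvature of the normal connection, $\varkappa=g(R^\perp(x,y)n_2,n_1)$ for a positively oriented orthonormal frame $(x,y,n_1,n_2)$ with $x,y$ tangent. Minimal means $\sigma(x,x)+\sigma(y,y)=0$ for orthonormal tangent $x,y$. A minimal surface is of general type if $K^2-\varkappa^2>0$ and $\varkappa\neq0$ everywhere. The ellipse of curvature at $p$ is $\{\sigma(v,v): v\in T_pM^2,\ |v|=1\}$; a tangent line is canonical if it is collinear with an axis of this ellipse. The geometric frame is a positively oriented orthonormal frame $\{x,y,n_1,n_2\}$ with $x,y$ canonical tangent fields and $n_1,n_2$ normal, satisfying $\nabla'_xx=\gamma_1y+\nu n_1$, $\nabla'_xy=-\gamma_1x+\mu n_2$, $\nabla'_yx=-\gamma_2y+\mu n_2$, $\nabla'_yy=\gamma_2x-\nu n_1$, $\nabla'_xn_1=-\nu x+\beta_1n_2$, $\nabla'_yn_1=\nu y+\beta_2n_2$, $\nabla'_xn_2=-\mu y-\beta_1n_1$, $\nabla'_yn_2=-\mu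 x-\beta_2n_1$, with $\mu>0$, $\nu\ne0$, $\mu^2\ne\nu^2$; the functions $\nu,\mu,\gamma_1,\gamma_2,\beta_1,\beta_2$ are the invariants of $M^2$. Parameters $(u,v)$ are semi-canonical if the parametric lines are integral curves of the canonical tangents, with $F=0$, $x=z_u/\sqrt E$, $y=z_v/\sqrt G$; then $\gamma_1=-y(\ln\sqrt E)$, $\gamma_2=-x(\ln\sqrt G)$. A minimal surface of general type is strongly regular if $\gamma_1\gamma_2\neq0$ everywhere. *)

theory Defs
  imports "HOL-Analysis.Analysis"
begin

fun Ck_on :: "nat \<Rightarrow> (real \<times> real) set \<Rightarrow> (real \<times> real \<Rightarrow> 'a::real_normed_vector) \<Rightarrow> bool" where
  "Ck_on 0 U f = continuous_on U f"
| "Ck_on (Suc k) U f =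
     (\<exists>fu fv. (\<forall>p\<in>U. (f has_derivative (\<lambda>h. fst h *\<^sub>R fu p + snd h *\<^sub>R fv p)) (at p))
              \<and> Ck_on k U fu \<and> Ck_on k U fv)"

definition smooth_on2 :: "(real \<times> real) set \<Rightarrow> (real \<times> real \<Rightarrow> 'a::real_normed_vector) \<Rightarrow> bool" where
  "smooth_on2 U f \<longleftrightarrow> (\<forall>k. Ck_on k U f)"

definition pu :: "(real \<times> real \<Rightarrow> 'a::real_normed_vector) \<Rightarrow> real \<times> real \<Rightarrow> 'a" where
  "pu f p = vector_derivative (\<lambda>t. f (t, snd p)) (at (fst p))"

definition pv :: "(real \<times> real \<Rightarrow> 'a::real_normed_vector) \<Rightarrow> real \<times> real \<Rightarrow> 'a" where
  "pv f p = vector_derivative (\<lambda>t. f (fst p, t)) (at (snd p))"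

definition fundE :: "(real \<times> real \<Rightarrow> real^4) \<Rightarrow> real \<times> real \<Rightarrow> real" where
  "fundE z p = pu z p \<bullet> pu z p"
definition fundF :: "(real \<times> real \<Rightarrow> real^4) \<Rightarrow> real \<times> real \<Rightarrow> real" where
  "fundF z p = pu z p \<bullet> pv z p"
definition fundG :: "(real \<times> real \<Rightarrow> real^4) \<Rightarrow> real \<times> real \<Rightarrow> real" where
  "fundG z p = pv z p \<bullet> pv z p"

definition pos_orthonormal :: "real^4 \<Rightarrow> real^4 \<Rightarrow> real^4 \<Rightarrow> real^4 \<Rightarrow> bool" where
  "pos_orthonormal a b c d \<longleftrightarrow>
     (let L = [a, b, c, d] in
       (\<forall>i<4. \<forall>j<4. (L!i) \<bullet> (L!j) = (if i = j then 1 else 0)))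
     \<and> det (vector [a, b, c, d] :: real^4^4) > 0"

text \<open>Here \<nabla>'_x X = (\<partial>_u X)/sqrt E and \<nabla>'_y X = (\<partial>_v X)/sqrt G, since x = z_u/sqrt E, y = z_v/sqrt G.\<close>
definition semicanonical_geometric_frame ::
  "(real \<times> real) set \<Rightarrow> (real \<times> real \<Rightarrow> real^4) \<Rightarrow>
   (real \<times> real \<Rightarrow> real^4) \<Rightarrow> (real \<times> real \<Rightarrow> real^4) \<Rightarrow> (real \<times> real \<Rightarrow> real^4) \<Rightarrow> (real \<times> real \<Rightarrow> real^4) \<Rightarrow>
   (real \<times> real \<Rightarrow> real) \<Rightarrow> (real \<times> real \<Rightarrow> real) \<Rightarrow> (real \<times> real \<Rightarrow> real) \<Rightarrow>
   (real \<times> real \<Rightarrow> real) \<Rightarrow> (real \<times> real \<Rightarrow> real) \<Rightarrow> (real \<times> real \<Rightarrow> real) \<Rightarrow> bool" where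
  "semicanonical_geometric_frame U z x y n1 n2 \<nu> \<mu> \<gamma>1 \<gamma>2 \<beta>1 \<beta>2 \<longleftrightarrow>
     open U \<and> smooth_on2 U z \<and> smooth_on2 U n1 \<and> smooth_on2 U n2 \<and>
     smooth_on2 U \<nu> \<and> smooth_on2 U \<mu> \<and> smooth_on2 U \<gamma>1 \<and> smooth_on2 U \<gamma>2 \<and>
     smooth_on2 U \<beta>1 \<and> smooth_on2 U \<beta>2 \<and>
     (\<forall>p\<in>U.
        fundE z p > 0 \<and> fundG z p > 0 \<and> fundF z p = 0 \<and>
        x p = (1 / sqrt (fundE z p)) *\<^sub>R pu z p \<and>
        y p = (1 / sqrt (fundG z p)) *\<^sub>R pv z p \<and>
        pos_orthonormal (x p) (y p) (n1 p) (n2 p) \<and>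
        \<mu> p > 0 \<and> \<nu> p \<noteq> 0 \<and> (\<mu> p)\<^sup>2 \<noteq> (\<nu> p)\<^sup>2 \<and>
        (1 / sqrt (fundE z p)) *\<^sub>R pu x p = \<gamma>1 p *\<^sub>R y p + \<nu> p *\<^sub>R n1 p \<and>
        (1 / sqrt (fundE z p)) *\<^sub>R pu y p = - \<gamma>1 p *\<^sub>R x p + \<mu> p *\<^sub>R n2 p \<and>
        (1 / sqrt (fundG z p)) *\<^sub>R pv x p = - \<gamma>2 p *\<^sub>R y p + \<mu> p *\<^sub>R n2 p \<and>
        (1 / sqrt (fundG z p)) *\<^sub>R pv y p = \<gamma>2 p *\<^sub>R x p - \<nu> p *\<^sub>R n1 p \<and>
        (1 / sqrt (fundE z p)) *\<^sub>R pu n1 p = - \<nu> p *\<^sub>R x p + \<beta>1 p *\<^sub>R n2 p \<and>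
        (1 / sqrt (fundG z p)) *\<^sub>R pv n1 p = \<nu> p *\<^sub>R y p + \<beta>2 p *\<^sub>R n2 p \<and>
        (1 / sqrt (fundE z p)) *\<^sub>R pu n2 p = - \<mu> p *\<^sub>R y p - \<beta>1 p *\<^sub>R n1 p \<and>
        (1 / sqrt (fundG z p)) *\<^sub>R pv n2 p = - \<mu> p *\<^sub>R x p - \<beta>2 p *\<^sub>R n1 p)"

end

theory Submission
  imports Defs
begin


lemma partial_u:
  assumes "(f has_derivative (\<lambda>h. fst h *\<^sub>R fu + snd h *\<^sub>R fv)) (at (s, c))"
  shows "((\<lambda>t. f (t, c)) has_vector_derivative fu) (at s)"
proof -
  have "((\<lambda>t. (t, c)) has_derivative (\<lambda>h. (h, 0))) (at s)"
    by (auto intro!: derivative_eq_intros)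
  from has_derivative_compose[OF this assms]
  show ?thesis unfolding has_vector_derivative_def by simp
qed

lemma partial_v:
  assumes "(f has_derivative (\<lambda>h. fst h *\<^sub>R fu + snd h *\<^sub>R fv)) (at (c, s))"
  shows "((\<lambda>t. f (c, t)) has_vector_derivative fv) (at s)"
proof -
  have "((\<lambda>t. (c, t)) has_derivative (\<lambda>h. (0, h))) (at s)"
    by (auto intro!: derivative_eq_intros)
  from has_derivative_compose[OF this assms]
  show ?thesis unfolding has_vector_derivative_def by simp
qed

lemma vd_inner:
  fixes f g :: "real \<Rightarrow> 'a::real_inner"
  assumes "(f has_vector_derivative f') (at t)" "(g has_vector_derivative g') (at t)"
  shows "((\<lambda>s. f s \<bullet> g s) has_real_derivative (f' \<bullet> g t + f t \<bullet> g')) (at t)"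
proof -
  from has_derivative_inner[OF assms[unfolded has_vector_derivative_def]]
  show ?thesis unfolding has_field_derivative_def
    by (rule has_derivative_eq_rhs) (auto simp: fun_eq_iff algebra_simps inner_commute)
qed

lemma deriv_map_eq:
  fixes a b c d :: "'a::real_normed_vector"
  assumes "(\<lambda>h::real\<times>real. fst h *\<^sub>R a + snd h *\<^sub>R b) = (\<lambda>h. fst h *\<^sub>R c + snd h *\<^sub>R d)"
  shows "a = c \<and> b = d"
  using fun_cong[OF assms, of "(1,0)"] fun_cong[OF assms, of "(0,1)"] by simp

lemma inner_zero_deriv:
  fixes f g :: "real\<times>real \<Rightarrow> 'a::real_inner"
  assumes U: "open U" "p \<in> U" and z: "\<forall>q\<in>U. f q \<bullet> g q = 0"
    and df: "(f has_derivative (\<lambda>h. fst h *\<^sub>R fu + snd h *\<^sub>R fv)) (at p)"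
    and dg: "(g has_derivative (\<lambda>h. fst h *\<^sub>R gu + snd h *\<^sub>R gv)) (at p)"
  shows "fu \<bullet> g p + f p \<bullet> gu = 0 \<and> fv \<bullet> g p + f p \<bullet> gv = 0"
proof -
  have d1: "((\<lambda>q. f q \<bullet> g q) has_derivative (\<lambda>h. fst h *\<^sub>R (fu \<bullet> g p + f p \<bullet> gu) + snd h *\<^sub>R (fv \<bullet> g p + f p \<bullet> gv))) (at p)"
    by (rule has_derivative_eq_rhs[OF has_derivative_inner[OF df dg]])
       (auto simp: fun_eq_iff algebra_simps inner_commute)
  have "((\<lambda>q. 0::real) has_derivative (\<lambda>h. fst h *\<^sub>R 0 + snd h *\<^sub>R 0)) (at p)"
    by (simp add: has_derivative_const)
  then have d2: "((\<lambda>q. f q \<bullet> g q) has_derivative (\<lambda>h. fst h *\<^sub>R 0 + snd h *\<^sub>R 0)) (at p)"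
    by (rule has_derivative_transform_within_open[OF _ U]) (use z in simp)
  from deriv_map_eq[OF has_derivative_unique[OF d1 d2]] show ?thesis by simp
qed

lemma deriv_eq_open:
  fixes f g :: "real\<times>real \<Rightarrow> 'a::real_normed_vector"
  assumes U: "open U" "p \<in> U" and z: "\<forall>q\<in>U. f q = g q"
    and df: "(f has_derivative (\<lambda>h. fst h *\<^sub>R fu + snd h *\<^sub>R fv)) (at p)"
    and dg: "(g has_derivative (\<lambda>h. fst h *\<^sub>R gu + snd h *\<^sub>R gv)) (at p)"
  shows "fu = gu \<and> fv = gv"
proof -
  have "(f has_derivative (\<lambda>h. fst h *\<^sub>R gu + snd h *\<^sub>R gv)) (at p)"
    by (rule has_derivative_transform_within_open[OF dg U]) (use z in simp)
  from deriv_map_eq[OF has_derivative_unique[OF df this]] show ?thesis .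
qed

lemma Ck_cont: assumes "Ck_on k U f" shows "continuous_on U f"
proof (cases k)
  case 0 then show ?thesis using assms by simp
next
  case (Suc m)
  then obtain fu fv where "\<forall>p\<in>U. (f has_derivative (\<lambda>h. fst h *\<^sub>R fu p + snd h *\<^sub>R fv p)) (at p)"
    using assms by auto
  then show ?thesis
    by (meson continuous_at_imp_continuous_on has_derivative_continuous)
qed



lemma schwarz_real:
  fixes f fu fv fuu fuv fvu fvv :: "real\<times>real \<Rightarrow> real"
  assumes U: "open U" "p \<in> U"
    and df: "\<forall>q\<in>U. (f has_derivative (\<lambda>h. fst h *\<^sub>R fu q + snd h *\<^sub>R fv q)) (at q)"
    and dfu: "\<forall>q\<in>U. (fu has_derivative (\<lambda>h. fst h *\<^sub>R fuu q + snd h *\<^sub>R fuv q)) (at q)"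
    and dfv: "\<forall>q\<in>U. (fv has_derivative (\<lambda>h. fst h *\<^sub>R fvu q + snd h *\<^sub>R fvv q)) (at q)"
    and c1: "continuous_on U fuv" and c2: "continuous_on U fvu"
  shows "fuv p = fvu p"
proof (rule ccontr)
  assume ne: "fuv p \<noteq> fvu p"
  obtain a b where p: "p = (a, b)" by (cases p)
  define d where "d = \<bar>fuv p - fvu p\<bar> / 2"
  have d: "d > 0" using ne by (simp add: d_def)
  have "isCont fuv p" using c1 U by (simp add: continuous_on_eq_continuous_at)
  then obtain e1 where e1: "e1 > 0" "\<And>q. dist q p < e1 \<Longrightarrow> dist (fuv q) (fuv p) < d"
    using d by (metis continuous_at_eps_delta)
  have "isCont fvu p" using c2 U by (simp add: continuous_on_eq_continuous_at)
  then obtain e2 where e2: "e2 > 0" "\<And>q. dist q p < e2 \<Longrightarrow> dist (fvu q) (fvu p) < d"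
    using d by (metis continuous_at_eps_delta)
  obtain r where r: "r > 0" "ball p r \<subseteq> U" using U open_contains_ball by blast
  define h where "h = min r (min e1 e2) / 3"
  have h: "h > 0" using r e1 e2 by (simp add: h_def)
  have box: "dist (a + s, b + t) p < min r (min e1 e2)" if "0 \<le> s" "s \<le> h" "0 \<le> t" "t \<le> h" for s t
  proof -
    have "dist (a + s, b + t) p = sqrt (s\<^sup>2 + t\<^sup>2)" by (simp add: p dist_Pair_Pair dist_real_def)
    also have "\<dots> \<le> \<bar>s\<bar> + \<bar>t\<bar>" by (rule sqrt_sum_squares_le_sum_abs)
    also have "\<dots> < min r (min e1 e2)" using that h by (simp add: h_def)
    finally show ?thesis .
  qed
  have inU: "(a + s, b + t) \<in> U" if "0 \<le> s" "s \<le> h" "0 \<le> t" "t \<le> h" for s t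
    using box[OF that] r by (auto simp: dist_commute)
  have inU': "(s, t) \<in> U" if "a \<le> s" "s \<le> a + h" "b \<le> t" "t \<le> b + h" for s t
    using inU[of "s - a" "t - b"] that by simp
  obtain \<xi> where \<xi>: "a < \<xi>" "\<xi> < a + h"
    "(f (a+h, b+h) - f (a+h, b)) - (f (a, b+h) - f (a, b)) = h * (fu (\<xi>, b+h) - fu (\<xi>, b))"
  proof -
    have "\<exists>z. a < z \<and> z < a + h \<and> (\<lambda>s. f (s, b+h) - f (s, b)) (a+h) - (\<lambda>s. f (s, b+h) - f (s, b)) a
            = (a + h - a) * (fu (z, b+h) - fu (z, b))"
    proof (rule MVT2)
      fix s assume s: "a \<le> s" "s \<le> a + h"
      have "((\<lambda>t. f (t, b+h)) has_vector_derivative fu (s, b+h)) (at s)"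
        using partial_u[OF df[rule_format, OF inU'[of s "b+h"]]] s h by auto
      moreover have "((\<lambda>t. f (t, b)) has_vector_derivative fu (s, b)) (at s)"
        using partial_u[OF df[rule_format, OF inU'[of s "b"]]] s h by auto
      ultimately show "((\<lambda>s. f (s, b+h) - f (s, b)) has_real_derivative fu (s, b+h) - fu (s, b)) (at s)"
        by (auto simp: has_real_derivative_iff_has_vector_derivative intro: has_vector_derivative_diff)
    qed (use h in simp)
    then show ?thesis using that by auto
  qed
  obtain \<eta> where \<eta>: "b < \<eta>" "\<eta> < b + h" "fu (\<xi>, b+h) - fu (\<xi>, b) = h * fuv (\<xi>, \<eta>)"
  proof -
    have "\<exists>z. b < z \<and> z < b + h \<and> (\<lambda>t. fu (\<xi>, t)) (b+h) - (\<lambda>t. fu (\<xi>, t)) b = (b + h - b) * fuv (\<xi>, z)"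
    proof (rule MVT2)
      fix t assume t: "b \<le> t" "t \<le> b + h"
      show "((\<lambda>t. fu (\<xi>, t)) has_real_derivative fuv (\<xi>, t)) (at t)"
        using partial_v[OF dfu[rule_format, OF inU'[of \<xi> t]]] t \<xi> by (auto simp: has_real_derivative_iff_has_vector_derivative)
    qed (use h in simp)
    then show ?thesis using that by auto
  qed
  obtain \<eta>' where \<eta>': "b < \<eta>'" "\<eta>' < b + h"
    "(f (a+h, b+h) - f (a, b+h)) - (f (a+h, b) - f (a, b)) = h * (fv (a+h, \<eta>') - fv (a, \<eta>'))"
  proof -
    have "\<exists>z. b < z \<and> z < b + h \<and> (\<lambda>t. f (a+h, t) - f (a, t)) (b+h) - (\<lambda>t. f (a+h, t) - f (a, t)) b
            = (b + h - b) * (fv (a+h, z) - fv (a, z))"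
    proof (rule MVT2)
      fix t assume t: "b \<le> t" "t \<le> b + h"
      have "((\<lambda>s. f (a+h, s)) has_vector_derivative fv (a+h, t)) (at t)"
        using partial_v[OF df[rule_format, OF inU'[of "a+h" t]]] t h by auto
      moreover have "((\<lambda>s. f (a, s)) has_vector_derivative fv (a, t)) (at t)"
        using partial_v[OF df[rule_format, OF inU'[of a t]]] t h by auto
      ultimately show "((\<lambda>t. f (a+h, t) - f (a, t)) has_real_derivative fv (a+h, t) - fv (a, t)) (at t)"
        by (auto simp: has_real_derivative_iff_has_vector_derivative intro: has_vector_derivative_diff)
    qed (use h in simp)
    then show ?thesis using that by auto
  qed
  obtain \<xi>' where \<xi>': "a < \<xi>'" "\<xi>' < a + h" "fv (a+h, \<eta>') - fv (a, \<eta>') = h * fvu (\<xi>', \<eta>')"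
  proof -
    have "\<exists>z. a < z \<and> z < a + h \<and> (\<lambda>s. fv (s, \<eta>')) (a+h) - (\<lambda>s. fv (s, \<eta>')) a = (a + h - a) * fvu (z, \<eta>')"
    proof (rule MVT2)
      fix s assume s: "a \<le> s" "s \<le> a + h"
      show "((\<lambda>s. fv (s, \<eta>')) has_real_derivative fvu (s, \<eta>')) (at s)"
        using partial_u[OF dfv[rule_format, OF inU'[of s \<eta>']]] s \<eta>' by (auto simp: has_real_derivative_iff_has_vector_derivative)
    qed (use h in simp)
    then show ?thesis using that by auto
  qed
  have "h * (h * fuv (\<xi>, \<eta>)) = h * (h * fvu (\<xi>', \<eta>'))"
    using \<xi>(3) \<eta>(3) \<eta>'(3) \<xi>'(3) by (simp add: algebra_simps)
  then have eq: "fuv (\<xi>, \<eta>) = fvu (\<xi>', \<eta>')" using h by simp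
  have "dist (fuv (\<xi>, \<eta>)) (fuv p) < d"
    using e1(2) box[of "\<xi> - a" "\<eta> - b"] \<xi> \<eta> by simp
  moreover have "dist (fvu (\<xi>', \<eta>')) (fvu p) < d"
    using e2(2) box[of "\<xi>' - a" "\<eta>' - b"] \<xi>' \<eta>' by simp
  ultimately show False using eq unfolding d_def dist_real_def by (auto simp: abs_if split: if_splits)
qed

lemma schwarz:
  fixes f fu fv fuu fuv fvu fvv :: "real\<times>real \<Rightarrow> 'a::real_inner"
  assumes U: "open U" "p \<in> U"
    and df: "\<forall>q\<in>U. (f has_derivative (\<lambda>h. fst h *\<^sub>R fu q + snd h *\<^sub>R fv q)) (at q)"
    and dfu: "\<forall>q\<in>U. (fu has_derivative (\<lambda>h. fst h *\<^sub>R fuu q + snd h *\<^sub>R fuv q)) (at q)"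
    and dfv: "\<forall>q\<in>U. (fv has_derivative (\<lambda>h. fst h *\<^sub>R fvu q + snd h *\<^sub>R fvv q)) (at q)"
    and c1: "continuous_on U fuv" and c2: "continuous_on U fvu"
  shows "fuv p = fvu p"
proof -
  define w where "w = fuv p - fvu p"
  have D: "((\<lambda>q. F q \<bullet> w) has_derivative (\<lambda>h. fst h *\<^sub>R (G1 q \<bullet> w) + snd h *\<^sub>R (G2 q \<bullet> w))) (at q)"
    if "(F has_derivative (\<lambda>h. fst h *\<^sub>R G1 q + snd h *\<^sub>R G2 q)) (at q)" for F G1 G2 q
    by (rule has_derivative_eq_rhs[OF has_derivative_inner_left[OF that]])
       (auto simp: fun_eq_iff algebra_simps)
  have "fuv p \<bullet> w = fvu p \<bullet> w"
    apply (rule schwarz_real[OF U, of "\<lambda>q. f q \<bullet> w" "\<lambda>q. fu q \<bullet> w" "\<lambda>q. fv q \<bullet> w"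
          "\<lambda>q. fuu q \<bullet> w" "\<lambda>q. fuv q \<bullet> w" "\<lambda>q. fvu q \<bullet> w" "\<lambda>q. fvv q \<bullet> w"])
    subgoal using df D by blast
    subgoal using dfu D by blast
    subgoal using dfv D by blast
    subgoal using c1 by (auto intro!: continuous_intros)
    subgoal using c2 by (auto intro!: continuous_intros)
    done
  then have "w \<bullet> w = 0" by (simp add: w_def inner_diff_left)
  then show ?thesis by (simp add: w_def)
qed



lemma alg_v:
  fixes x y n1 n2 zu zv zuu zuv zvv n1u n1v n2u n2v :: "'a::real_inner"
  assumes o: "x\<bullet>x=1" "y\<bullet>y=1" "n1\<bullet>n1=1" "n2\<bullet>n2=1" "x\<bullet>y=0" "x\<bullet>n1=0" "x\<bullet>n2=0" "y\<bullet>n1=0" "y\<bullet>n2=0" "n1\<bullet>n2=0"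
    and ab: "a > 0" "b > 0"
    and n: "n1u = a *\<^sub>R (- \<nu> *\<^sub>R x + \<beta>1 *\<^sub>R n2)" "n1v = b *\<^sub>R (\<nu> *\<^sub>R y + \<beta>2 *\<^sub>R n2)"
      "n2u = a *\<^sub>R (- \<mu> *\<^sub>R y - \<beta>1 *\<^sub>R n1)" "n2v = b *\<^sub>R (- \<mu> *\<^sub>R x - \<beta>2 *\<^sub>R n1)"
    and zz: "zu = a *\<^sub>R x" "zv = b *\<^sub>R y"
    and P: "zuu \<bullet> n1 = a\<^sup>2 * \<nu>" and Q: "zuv \<bullet> n2 = a * b * \<mu>"
    and k: "zuu \<bullet> n2 = 0" "zuv \<bullet> n1 = 0" "zvv \<bullet> n1 = - b\<^sup>2 * \<nu>" "zvv \<bullet> n2 = 0"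
    and I5: "zuu \<bullet> zv + zu \<bullet> zuv = 0"
  shows "(2 * (zuv \<bullet> zu)) * (zuv \<bullet> n2)\<^sup>2 / b\<^sup>2 + a\<^sup>2 * (2 * (zuv \<bullet> n2) * (- (zvv \<bullet> n2u) + zuv \<bullet> n2v)) / b\<^sup>2
        - a\<^sup>2 * (zuv \<bullet> n2)\<^sup>2 * (2 * (zvv \<bullet> zv)) / (b\<^sup>2)\<^sup>2 - 2 * (zuu \<bullet> n1) * (- (zuv \<bullet> n1u) + zuu \<bullet> n1v) = 0"
proof -
  have I5': "zuu \<bullet> y = - a / b * (zuv \<bullet> x)"
    using I5 ab unfolding zz by (simp add: inner_commute field_simps)
  show ?thesis
    unfolding n zz
    using ab
    apply (simp add: inner_add_right inner_diff_right inner_add_left inner_diff_left P Q k I5' o)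
    apply (simp add: field_simps power2_eq_square eval_nat_numeral)
    done
qed

lemma alg_u:
  fixes x y n1 n2 zu zv zuu zuv zvv n1u n1v n2u n2v :: "'a::real_inner"
  assumes o: "x\<bullet>x=1" "y\<bullet>y=1" "n1\<bullet>n1=1" "n2\<bullet>n2=1" "x\<bullet>y=0" "x\<bullet>n1=0" "x\<bullet>n2=0" "y\<bullet>n1=0" "y\<bullet>n2=0" "n1\<bullet>n2=0"
    and ab: "a > 0" "b > 0"
    and n: "n1u = a *\<^sub>R (- \<nu> *\<^sub>R x + \<beta>1 *\<^sub>R n2)" "n1v = b *\<^sub>R (\<nu> *\<^sub>R y + \<beta>2 *\<^sub>R n2)"
      "n2u = a *\<^sub>R (- \<mu> *\<^sub>R y - \<beta>1 *\<^sub>R n1)" "n2v = b *\<^sub>R (- \<mu> *\<^sub>R x - \<beta>2 *\<^sub>R n1)"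
    and zz: "zu = a *\<^sub>R x" "zv = b *\<^sub>R y"
    and P: "zuu \<bullet> n1 = a\<^sup>2 * \<nu>" and Q: "zuv \<bullet> n2 = a * b * \<mu>"
    and k: "zuu \<bullet> n2 = 0" "zuv \<bullet> n1 = 0" "zvv \<bullet> n1 = - b\<^sup>2 * \<nu>" "zvv \<bullet> n2 = 0"
    and I5: "zvv \<bullet> zu + zv \<bullet> zuv = 0"
  shows "(2 * (zuv \<bullet> zv)) * (zuv \<bullet> n2)\<^sup>2 / a\<^sup>2 + b\<^sup>2 * (2 * (zuv \<bullet> n2) * (- (zuu \<bullet> n2v) + zuv \<bullet> n2u)) / a\<^sup>2
        - b\<^sup>2 * (zuv \<bullet> n2)\<^sup>2 * (2 * (zuu \<bullet> zu)) / (a\<^sup>2)\<^sup>2 - 2 * (zvv \<bullet> n1) * (- (zuv \<bullet> n1v) + zvv \<bullet> n1u) = 0"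
proof -
  have I5': "zvv \<bullet> x = - b / a * (zuv \<bullet> y)"
    using I5 ab unfolding zz by (simp add: inner_commute field_simps)
  show ?thesis
    unfolding n zz
    using ab
    apply (simp add: inner_add_right inner_diff_right inner_add_left inner_diff_left P Q k I5' o)
    apply (simp add: field_simps power2_eq_square eval_nat_numeral)
    done
qed



lemma CkE:
  assumes "Ck_on (Suc k) U f"
  obtains fu fv where "\<forall>p\<in>U. (f has_derivative (\<lambda>h. fst h *\<^sub>R fu p + snd h *\<^sub>R fv p)) (at p)"
    "Ck_on k U fu" "Ck_on k U fv"
  using assms by auto

lemma pu_eq:
  assumes "(f has_derivative (\<lambda>h. fst h *\<^sub>R a + snd h *\<^sub>R b)) (at q)"
  shows "pu f q = a"
proof -
  from assms have "(f has_derivative (\<lambda>h. fst h *\<^sub>R a + snd h *\<^sub>R b)) (at (fst q, snd q))" by simp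
  from vector_derivative_at[OF partial_u[OF this]] show ?thesis by (simp add: pu_def)
qed

lemma pv_eq:
  assumes "(f has_derivative (\<lambda>h. fst h *\<^sub>R a + snd h *\<^sub>R b)) (at q)"
  shows "pv f q = b"
proof -
  from assms have "(f has_derivative (\<lambda>h. fst h *\<^sub>R a + snd h *\<^sub>R b)) (at (fst q, snd q))" by simp
  from vector_derivative_at[OF partial_v[OF this]] show ?thesis by (simp add: pv_def)
qed

lemma scale_inv1: fixes X Y :: "'a::real_vector" assumes "(c::real) \<noteq> 0" "X = (1/c) *\<^sub>R Y" shows "Y = c *\<^sub>R X"
proof -
  have "c *\<^sub>R X = (c * (1/c)) *\<^sub>R Y" using assms(2) by simp
  then show ?thesis using assms(1) by simp
qed
lemma scale_inv2: fixes Y R :: "'a::real_vector" shows "(c::real) \<noteq> 0 \<Longrightarrow> (1/c) *\<^sub>R Y = R \<Longrightarrow> Y = c *\<^sub>R R"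
  using scale_inv1[of c R Y] by simp

lemma orth:
  assumes "pos_orthonormal a b c d"
  shows "a\<bullet>a=1" "b\<bullet>b=1" "c\<bullet>c=1" "d\<bullet>d=1" "a\<bullet>b=0" "a\<bullet>c=0" "a\<bullet>d=0" "b\<bullet>c=0" "b\<bullet>d=0" "c\<bullet>d=0"
proof -
  have L: "\<forall>i<4. \<forall>j<4. ([a,b,c,d]!i) \<bullet> ([a,b,c,d]!j) = (if i = j then 1 else 0)"
    using assms unfolding pos_orthonormal_def Let_def by blast
  show "a\<bullet>a=1" using L[rule_format, of 0 0] by simp
  show "b\<bullet>b=1" using L[rule_format, of 1 1] by simp
  show "c\<bullet>c=1" using L[rule_format, of 2 2] by simp
  show "d\<bullet>d=1" using L[rule_format, of 3 3] by simp
  show "a\<bullet>b=0" using L[rule_format, of 0 1] by simp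
  show "a\<bullet>c=0" using L[rule_format, of 0 2] by simp
  show "a\<bullet>d=0" using L[rule_format, of 0 3] by simp
  show "b\<bullet>c=0" using L[rule_format, of 1 2] by simp
  show "b\<bullet>d=0" using L[rule_format, of 1 3] by simp
  show "c\<bullet>d=0" using L[rule_format, of 2 3] by simp
qed

lemma normals:
  fixes x y n1 n2 zu zv zuu zuv zvv n1u n1v n2u n2v :: "'a::real_inner"
  assumes o: "x\<bullet>x=1" "y\<bullet>y=1" "n1\<bullet>n1=1" "n2\<bullet>n2=1" "x\<bullet>y=0" "x\<bullet>n1=0" "x\<bullet>n2=0" "y\<bullet>n1=0" "y\<bullet>n2=0" "n1\<bullet>n2=0"
    and n: "n1u = a *\<^sub>R (- \<nu> *\<^sub>R x + \<beta>1 *\<^sub>R n2)" "n1v = b *\<^sub>R (\<nu> *\<^sub>R y + \<beta>2 *\<^sub>R n2)"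
      "n2u = a *\<^sub>R (- \<mu> *\<^sub>R y - \<beta>1 *\<^sub>R n1)" "n2v = b *\<^sub>R (- \<mu> *\<^sub>R x - \<beta>2 *\<^sub>R n1)"
    and zz: "zu = a *\<^sub>R x" "zv = b *\<^sub>R y"
    and K: "zuu \<bullet> n1 + zu \<bullet> n1u = 0" "zuv \<bullet> n1 + zu \<bullet> n1v = 0"
      "zuu \<bullet> n2 + zu \<bullet> n2u = 0" "zuv \<bullet> n2 + zu \<bullet> n2v = 0"
      "zvv \<bullet> n1 + zv \<bullet> n1v = 0" "zvv \<bullet> n2 + zv \<bullet> n2v = 0"
  shows "zuu \<bullet> n1 = a\<^sup>2 * \<nu>" "zuv \<bullet> n2 = a * b * \<mu>"
     "zuu \<bullet> n2 = 0" "zuv \<bullet> n1 = 0" "zvv \<bullet> n1 = - b\<^sup>2 * \<nu>" "zvv \<bullet> n2 = 0"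
  using K unfolding n zz
  by (simp_all add: inner_add_right inner_diff_right inner_add_left inner_diff_left o inner_commute[of y x] power2_eq_square algebra_simps)

lemma sqrt_sqrt_deriv:
  assumes "(\<Phi> has_real_derivative 0) (at t)" "\<Phi> t \<noteq> 0"
  shows "((\<lambda>s. sqrt (sqrt ((\<Phi> s)\<^sup>2))) has_real_derivative 0) (at t)"
proof -
  have p: "(\<Phi> t)\<^sup>2 > 0" using assms(2) by simp
  have d1: "((\<lambda>s. (\<Phi> s)\<^sup>2) has_real_derivative 0) (at t)"
    using DERIV_power[OF assms(1), of 2] by simp
  have d2: "((\<lambda>s. sqrt ((\<Phi> s)\<^sup>2)) has_real_derivative 0) (at t)"
    using DERIV_chain2[OF DERIV_real_sqrt[OF p] d1] by simp
  have "sqrt ((\<Phi> t)\<^sup>2) > 0" using p by simp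
  from DERIV_chain2[OF DERIV_real_sqrt[OF this] d2] show ?thesis by simp
qed

lemma open_line_v: "open U \<Longrightarrow> open {t. (c::real, t) \<in> U}"
proof -
  assume "open U"
  then have "open (Pair c -` U)" by (rule open_vimage) (auto intro!: continuous_intros)
  then show ?thesis by (simp add: vimage_def)
qed

lemma open_line_u: "open U \<Longrightarrow> open {t. (t, c::real) \<in> U}"
proof -
  assume "open U"
  then have "open ((\<lambda>t. (t, c)) -` U)" by (rule open_vimage) (auto intro!: continuous_intros)
  then show ?thesis by (simp add: vimage_def)
qed


lemma val_v:
  fixes a b \<mu> \<nu> :: real
  assumes "a > 0" "b > 0"
  shows "sqrt (sqrt ((a\<^sup>2 * (a * b * \<mu>)\<^sup>2 / b\<^sup>2 - (a\<^sup>2 * \<nu>)\<^sup>2)\<^sup>2)) = a\<^sup>2 * sqrt \<bar>\<mu>\<^sup>2 - \<nu>\<^sup>2\<bar>"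
proof -
  have "a\<^sup>2 * (a * b * \<mu>)\<^sup>2 / b\<^sup>2 - (a\<^sup>2 * \<nu>)\<^sup>2 = (a\<^sup>2)\<^sup>2 * (\<mu>\<^sup>2 - \<nu>\<^sup>2)"
    using assms by (simp add: field_simps power2_eq_square)
  moreover have "sqrt (a ^ 4) = a\<^sup>2"
  proof -
    have "a ^ 4 = (a\<^sup>2)\<^sup>2" by (simp add: eval_nat_numeral)
    then show ?thesis using real_sqrt_abs[of "a\<^sup>2"] by simp
  qed
  ultimately show ?thesis
    by (simp add: real_sqrt_mult abs_mult)
qed

lemma val_u:
  fixes a b \<mu> \<nu> :: real
  assumes "a > 0" "b > 0"
  shows "sqrt (sqrt ((b\<^sup>2 * (a * b * \<mu>)\<^sup>2 / a\<^sup>2 - (- b\<^sup>2 * \<nu>)\<^sup>2)\<^sup>2)) = b\<^sup>2 * sqrt \<bar>\<mu>\<^sup>2 - \<nu>\<^sup>2\<bar>"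
proof -
  have "b\<^sup>2 * (a * b * \<mu>)\<^sup>2 / a\<^sup>2 - (- b\<^sup>2 * \<nu>)\<^sup>2 = (b\<^sup>2)\<^sup>2 * (\<mu>\<^sup>2 - \<nu>\<^sup>2)"
    using assms by (simp add: field_simps power2_eq_square)
  moreover have "sqrt (b ^ 4) = b\<^sup>2"
  proof -
    have "b ^ 4 = (b\<^sup>2)\<^sup>2" by (simp add: eval_nat_numeral)
    then show ?thesis using real_sqrt_abs[of "b\<^sup>2"] by simp
  qed
  ultimately show ?thesis
    by (simp add: real_sqrt_mult abs_mult)
qed


theorem lemma6p1:
  fixes U :: "(real \<times> real) set" and z x y n1 n2 :: "real \<times> real \<Rightarrow> real^4"
    and \<nu> \<mu> \<gamma>1 \<gamma>2 \<beta>1 \<beta>2 :: "real \<times> real \<Rightarrow> real"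
  assumes frame: "semicanonical_geometric_frame U z x y n1 n2 \<nu> \<mu> \<gamma>1 \<gamma>2 \<beta>1 \<beta>2"
    and strongly_regular: "\<forall>p\<in>U. \<gamma>1 p * \<gamma>2 p \<noteq> 0"
  shows "(\<forall>p\<in>U. ((\<lambda>t. fundE z (fst p, t) * sqrt \<bar>(\<mu> (fst p, t))\<^sup>2 - (\<nu> (fst p, t))\<^sup>2\<bar>)
                    has_real_derivative 0) (at (snd p))) \<and>
         (\<forall>p\<in>U. ((\<lambda>t. fundG z (t, snd p) * sqrt \<bar>(\<mu> (t, snd p))\<^sup>2 - (\<nu> (t, snd p))\<^sup>2\<bar>)
                    has_real_derivative 0) (at (fst p)))"
proof -
  note F = frame[unfolded semicanonical_geometric_frame_def]
  have U: "open U" using F by blast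
  have sz: "smooth_on2 U z" and sn1: "smooth_on2 U n1" and sn2: "smooth_on2 U n2" using F by blast+
  note Pt = F[THEN conjunct2, THEN conjunct2, THEN conjunct2, THEN conjunct2, THEN conjunct2,
      THEN conjunct2, THEN conjunct2, THEN conjunct2, THEN conjunct2, THEN conjunct2]
  have "Ck_on (Suc (Suc (Suc 0))) U z" using sz unfolding smooth_on2_def by blast
  then obtain zu zv where dz: "\<forall>p\<in>U. (z has_derivative (\<lambda>h. fst h *\<^sub>R zu p + snd h *\<^sub>R zv p)) (at p)"
    and C2u: "Ck_on (Suc (Suc 0)) U zu" and C2v: "Ck_on (Suc (Suc 0)) U zv" by (rule CkE)
  obtain zuu zuv where dzu: "\<forall>p\<in>U. (zu has_derivative (\<lambda>h. fst h *\<^sub>R zuu p + snd h *\<^sub>R zuv p)) (at p)"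
    and C1uu: "Ck_on (Suc 0) U zuu" and C1uv: "Ck_on (Suc 0) U zuv" using C2u by (rule CkE)
  obtain zvu zvv where dzv: "\<forall>p\<in>U. (zv has_derivative (\<lambda>h. fst h *\<^sub>R zvu p + snd h *\<^sub>R zvv p)) (at p)"
    and C1vu: "Ck_on (Suc 0) U zvu" and C1vv: "Ck_on (Suc 0) U zvv" using C2v by (rule CkE)
  obtain zuuu zuuv where dzuu: "\<forall>p\<in>U. (zuu has_derivative (\<lambda>h. fst h *\<^sub>R zuuu p + snd h *\<^sub>R zuuv p)) (at p)"
    and C0uuv: "Ck_on 0 U zuuv" using C1uu by (rule CkE)
  obtain zuvu zuvv where dzuv: "\<forall>p\<in>U. (zuv has_derivative (\<lambda>h. fst h *\<^sub>R zuvu p + snd h *\<^sub>R zuvv p)) (at p)"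
    and C0uvu: "Ck_on 0 U zuvu" using C1uv by (rule CkE)
  obtain zvuu zvuv where dzvu: "\<forall>p\<in>U. (zvu has_derivative (\<lambda>h. fst h *\<^sub>R zvuu p + snd h *\<^sub>R zvuv p)) (at p)"
    and C0vuv: "Ck_on 0 U zvuv" using C1vu by (rule CkE)
  obtain zvvu zvvv where dzvv: "\<forall>p\<in>U. (zvv has_derivative (\<lambda>h. fst h *\<^sub>R zvvu p + snd h *\<^sub>R zvvv p)) (at p)"
    and C0vvu: "Ck_on 0 U zvvu" using C1vv by (rule CkE)
  have "Ck_on (Suc 0) U n1" using sn1 unfolding smooth_on2_def by blast
  then obtain n1u n1v where dn1: "\<forall>p\<in>U. (n1 has_derivative (\<lambda>h. fst h *\<^sub>R n1u p + snd h *\<^sub>R n1v p)) (at p)"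
    by (rule CkE)
  have "Ck_on (Suc 0) U n2" using sn2 unfolding smooth_on2_def by blast
  then obtain n2u n2v where dn2: "\<forall>p\<in>U. (n2 has_derivative (\<lambda>h. fst h *\<^sub>R n2u p + snd h *\<^sub>R n2v p)) (at p)"
    by (rule CkE)

  have S0: "zuv q = zvu q" if q: "q \<in> U" for q
    using schwarz[OF U q dz dzu dzv Ck_cont[OF C1uv] Ck_cont[OF C1vu]] .
  have S1: "zuuv q = zuvu q" if q: "q \<in> U" for q
    using schwarz[OF U q dzu dzuu dzuv] C0uuv C0uvu by simp
  have S2: "zvuv q = zvvu q" if q: "q \<in> U" for q
    using schwarz[OF U q dzv dzvu dzvv] C0vuv C0vvu by simp
  have S3: "zuvv q = zvuv q" if q: "q \<in> U" for q
    using deriv_eq_open[OF U q _ dzuv[rule_format, OF q] dzvu[rule_format, OF q]] S0 by blast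

  define a where "a = (\<lambda>q. sqrt (fundE z q))"
  define b where "b = (\<lambda>q. sqrt (fundG z q))"
  have fr: "zu q = a q *\<^sub>R x q \<and> zv q = b q *\<^sub>R y q \<and>
      n1u q = a q *\<^sub>R (- \<nu> q *\<^sub>R x q + \<beta>1 q *\<^sub>R n2 q) \<and> n1v q = b q *\<^sub>R (\<nu> q *\<^sub>R y q + \<beta>2 q *\<^sub>R n2 q) \<and>
      n2u q = a q *\<^sub>R (- \<mu> q *\<^sub>R y q - \<beta>1 q *\<^sub>R n1 q) \<and> n2v q = b q *\<^sub>R (- \<mu> q *\<^sub>R x q - \<beta>2 q *\<^sub>R n1 q) \<and>
      a q > 0 \<and> b q > 0 \<and> zu q \<bullet> zv q = 0 \<and> fundE z q = (a q)\<^sup>2 \<and> fundG z q = (b q)\<^sup>2 \<and>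
      (\<mu> q)\<^sup>2 \<noteq> (\<nu> q)\<^sup>2 \<and> pos_orthonormal (x q) (y q) (n1 q) (n2 q)" if q: "q \<in> U" for q
  proof -
    note Pq = Pt[rule_format, OF q]
    have e1: "pu z q = zu q" by (rule pu_eq[OF dz[rule_format, OF q]])
    have e2: "pv z q = zv q" by (rule pv_eq[OF dz[rule_format, OF q]])
    have e3: "pu n1 q = n1u q" by (rule pu_eq[OF dn1[rule_format, OF q]])
    have e4: "pv n1 q = n1v q" by (rule pv_eq[OF dn1[rule_format, OF q]])
    have e5: "pu n2 q = n2u q" by (rule pu_eq[OF dn2[rule_format, OF q]])
    have e6: "pv n2 q = n2v q" by (rule pv_eq[OF dn2[rule_format, OF q]])
    have Ep: "fundE z q > 0" and Gp: "fundG z q > 0" using Pq by blast+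
    have ap: "a q > 0" and bp: "b q > 0" using Ep Gp by (simp_all add: a_def b_def)
    have aq: "a q \<noteq> 0" "b q \<noteq> 0" using ap bp by auto
    have "x q = (1 / a q) *\<^sub>R pu z q" using Pq unfolding a_def by blast
    from scale_inv1[OF aq(1) this] have "zu q = a q *\<^sub>R x q" using e1 by simp
    moreover have "y q = (1 / b q) *\<^sub>R pv z q" using Pq unfolding b_def by blast
    from scale_inv1[OF aq(2) this] have "zv q = b q *\<^sub>R y q" using e2 by simp
    moreover have "(1 / a q) *\<^sub>R pu n1 q = - \<nu> q *\<^sub>R x q + \<beta>1 q *\<^sub>R n2 q" using Pq unfolding a_def by blast
    from scale_inv2[OF aq(1) this] have "n1u q = a q *\<^sub>R (- \<nu> q *\<^sub>R x q + \<beta>1 q *\<^sub>R n2 q)" using e3 by simp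
    moreover have "(1 / b q) *\<^sub>R pv n1 q = \<nu> q *\<^sub>R y q + \<beta>2 q *\<^sub>R n2 q" using Pq unfolding b_def by blast
    from scale_inv2[OF aq(2) this] have "n1v q = b q *\<^sub>R (\<nu> q *\<^sub>R y q + \<beta>2 q *\<^sub>R n2 q)" using e4 by simp
    moreover have "(1 / a q) *\<^sub>R pu n2 q = - \<mu> q *\<^sub>R y q - \<beta>1 q *\<^sub>R n1 q" using Pq unfolding a_def by blast
    from scale_inv2[OF aq(1) this] have "n2u q = a q *\<^sub>R (- \<mu> q *\<^sub>R y q - \<beta>1 q *\<^sub>R n1 q)" using e5 by simp
    moreover have "(1 / b q) *\<^sub>R pv n2 q = - \<mu> q *\<^sub>R x q - \<beta>2 q *\<^sub>R n1 q" using Pq unfolding b_def by blast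
    from scale_inv2[OF aq(2) this] have "n2v q = b q *\<^sub>R (- \<mu> q *\<^sub>R x q - \<beta>2 q *\<^sub>R n1 q)" using e6 by simp
    moreover have "zu q \<bullet> zv q = 0" using Pq e1 e2 by (simp add: fundF_def)
    moreover have "fundE z q = (a q)\<^sup>2" using Ep by (simp add: a_def)
    moreover have "fundG z q = (b q)\<^sup>2" using Gp by (simp add: b_def)
    moreover have "(\<mu> q)\<^sup>2 \<noteq> (\<nu> q)\<^sup>2" "pos_orthonormal (x q) (y q) (n1 q) (n2 q)" using Pq by blast+
    ultimately show ?thesis using ap bp by blast
  qed
  have EE: "fundE z q = zu q \<bullet> zu q" "fundG z q = zv q \<bullet> zv q" if q: "q \<in> U" for q
    using pu_eq[OF dz[rule_format, OF q]] pv_eq[OF dz[rule_format, OF q]]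
    by (simp_all add: fundE_def fundG_def)
  have O: "x q\<bullet>x q=1" "y q\<bullet>y q=1" "n1 q\<bullet>n1 q=1" "n2 q\<bullet>n2 q=1" "x q\<bullet>y q=0" "x q\<bullet>n1 q=0"
      "x q\<bullet>n2 q=0" "y q\<bullet>n1 q=0" "y q\<bullet>n2 q=0" "n1 q\<bullet>n2 q=0" if q: "q \<in> U" for q
    using orth[of "x q" "y q" "n1 q" "n2 q"] fr[OF q] by blast+

  have zero1: "zu q \<bullet> n1 q = 0" "zu q \<bullet> n2 q = 0" "zv q \<bullet> n1 q = 0" "zv q \<bullet> n2 q = 0" if q: "q \<in> U" for q
    using fr[OF q] O[OF q] by simp_all
  have K1: "zuu q \<bullet> n1 q + zu q \<bullet> n1u q = 0 \<and> zuv q \<bullet> n1 q + zu q \<bullet> n1v q = 0" if q: "q \<in> U" for q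
    by (rule inner_zero_deriv[OF U q _ dzu[rule_format, OF q] dn1[rule_format, OF q]]) (use zero1 in blast)
  have K2: "zuu q \<bullet> n2 q + zu q \<bullet> n2u q = 0 \<and> zuv q \<bullet> n2 q + zu q \<bullet> n2v q = 0" if q: "q \<in> U" for q
    by (rule inner_zero_deriv[OF U q _ dzu[rule_format, OF q] dn2[rule_format, OF q]]) (use zero1 in blast)
  have K3: "zvu q \<bullet> n1 q + zv q \<bullet> n1u q = 0 \<and> zvv q \<bullet> n1 q + zv q \<bullet> n1v q = 0" if q: "q \<in> U" for q
    by (rule inner_zero_deriv[OF U q _ dzv[rule_format, OF q] dn1[rule_format, OF q]]) (use zero1 in blast)
  have K4: "zvu q \<bullet> n2 q + zv q \<bullet> n2u q = 0 \<and> zvv q \<bullet> n2 q + zv q \<bullet> n2v q = 0" if q: "q \<in> U" for q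
    by (rule inner_zero_deriv[OF U q _ dzv[rule_format, OF q] dn2[rule_format, OF q]]) (use zero1 in blast)
  have K5: "zuu q \<bullet> zv q + zu q \<bullet> zvu q = 0 \<and> zuv q \<bullet> zv q + zu q \<bullet> zvv q = 0" if q: "q \<in> U" for q
    by (rule inner_zero_deriv[OF U q _ dzu[rule_format, OF q] dzv[rule_format, OF q]]) (use fr in blast)
  have N: "zuu q \<bullet> n1 q = (a q)\<^sup>2 * \<nu> q" "zuv q \<bullet> n2 q = a q * b q * \<mu> q"
     "zuu q \<bullet> n2 q = 0" "zuv q \<bullet> n1 q = 0" "zvv q \<bullet> n1 q = - (b q)\<^sup>2 * \<nu> q" "zvv q \<bullet> n2 q = 0"
    if q: "q \<in> U" for q
  proof -
    note frq = fr[OF q]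
    have f1: "zu q = a q *\<^sub>R x q" using frq by (rule conjunct1)
    have f2: "zv q = b q *\<^sub>R y q" using frq by blast
    have f3: "n1u q = a q *\<^sub>R (- \<nu> q *\<^sub>R x q + \<beta>1 q *\<^sub>R n2 q)" using frq by blast
    have f4: "n1v q = b q *\<^sub>R (\<nu> q *\<^sub>R y q + \<beta>2 q *\<^sub>R n2 q)" using frq by blast
    have f5: "n2u q = a q *\<^sub>R (- \<mu> q *\<^sub>R y q - \<beta>1 q *\<^sub>R n1 q)" using frq by blast
    have f6: "n2v q = b q *\<^sub>R (- \<mu> q *\<^sub>R x q - \<beta>2 q *\<^sub>R n1 q)" using frq by blast
    note nn = normals[OF O[OF q] f3 f4 f5 f6 f1 f2 K1[OF q, THEN conjunct1] K1[OF q, THEN conjunct2]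
      K2[OF q, THEN conjunct1] K2[OF q, THEN conjunct2] K3[OF q, THEN conjunct2] K4[OF q, THEN conjunct2]]
    show "zuu q \<bullet> n1 q = (a q)\<^sup>2 * \<nu> q" by (rule nn(1))
    show "zuv q \<bullet> n2 q = a q * b q * \<mu> q" by (rule nn(2))
    show "zuu q \<bullet> n2 q = 0" by (rule nn(3))
    show "zuv q \<bullet> n1 q = 0" by (rule nn(4))
    show "zvv q \<bullet> n1 q = - (b q)\<^sup>2 * \<nu> q" by (rule nn(5))
    show "zvv q \<bullet> n2 q = 0" by (rule nn(6))
  qed
  have K6: "zuvu q \<bullet> n1 q + zuv q \<bullet> n1u q = 0 \<and> zuvv q \<bullet> n1 q + zuv q \<bullet> n1v q = 0" if q: "q \<in> U" for q
    by (rule inner_zero_deriv[OF U q _ dzuv[rule_format, OF q] dn1[rule_format, OF q]]) (use N in blast)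
  have K7: "zvvu q \<bullet> n2 q + zvv q \<bullet> n2u q = 0" if q: "q \<in> U" for q
    using inner_zero_deriv[OF U q _ dzvv[rule_format, OF q] dn2[rule_format, OF q]] N by blast
  have K8: "zuuv q \<bullet> n2 q + zuu q \<bullet> n2v q = 0" if q: "q \<in> U" for q
    using inner_zero_deriv[OF U q _ dzuu[rule_format, OF q] dn2[rule_format, OF q]] N by blast

  have C1: "\<forall>p\<in>U. ((\<lambda>t. fundE z (fst p, t) * sqrt \<bar>(\<mu> (fst p, t))\<^sup>2 - (\<nu> (fst p, t))\<^sup>2\<bar>)
                    has_real_derivative 0) (at (snd p))"
  proof
    fix p assume p: "p \<in> U"
    obtain u0 v0 where pe: "p = (u0, v0)" by (cases p)
    have p': "(u0, v0) \<in> U" using p pe by simp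
    define S where "S = {t. (u0, t) \<in> U}"
    have S: "open S" "v0 \<in> S" using open_line_v[OF U] p' S_def by auto
    have vzu: "((\<lambda>t. zu (u0,t)) has_vector_derivative zuv p) (at v0)"
      using partial_v[OF dzu[rule_format, OF p']] pe by simp
    have vzv: "((\<lambda>t. zv (u0,t)) has_vector_derivative zvv p) (at v0)"
      using partial_v[OF dzv[rule_format, OF p']] pe by simp
    have vzuu: "((\<lambda>t. zuu (u0,t)) has_vector_derivative zuuv p) (at v0)"
      using partial_v[OF dzuu[rule_format, OF p']] pe by simp
    have vzuv: "((\<lambda>t. zuv (u0,t)) has_vector_derivative zuvv p) (at v0)"
      using partial_v[OF dzuv[rule_format, OF p']] pe by simp
    have vn1: "((\<lambda>t. n1 (u0,t)) has_vector_derivative n1v p) (at v0)"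
      using partial_v[OF dn1[rule_format, OF p']] pe by simp
    have vn2: "((\<lambda>t. n2 (u0,t)) has_vector_derivative n2v p) (at v0)"
      using partial_v[OF dn2[rule_format, OF p']] pe by simp
    have de: "((\<lambda>t. zu (u0,t) \<bullet> zu (u0,t)) has_real_derivative 2 * (zuv p \<bullet> zu p)) (at v0)"
      using vd_inner[OF vzu vzu] pe by (simp add: inner_commute)
    have dg: "((\<lambda>t. zv (u0,t) \<bullet> zv (u0,t)) has_real_derivative 2 * (zvv p \<bullet> zv p)) (at v0)"
      using vd_inner[OF vzv vzv] pe by (simp add: inner_commute)
    have "zuuv p \<bullet> n1 p = - (zuv p \<bullet> n1u p)" using S1[OF p] K6[OF p] by simp
    then have dP: "((\<lambda>t. zuu (u0,t) \<bullet> n1 (u0,t)) has_real_derivative - (zuv p \<bullet> n1u p) + zuu p \<bullet> n1v p) (at v0)"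
      using vd_inner[OF vzuu vn1] pe by simp
    have "zuvv p \<bullet> n2 p = - (zvv p \<bullet> n2u p)" using S3[OF p] S2[OF p] K7[OF p] by simp
    then have dQ: "((\<lambda>t. zuv (u0,t) \<bullet> n2 (u0,t)) has_real_derivative - (zvv p \<bullet> n2u p) + zuv p \<bullet> n2v p) (at v0)"
      using vd_inner[OF vzuv vn2] pe by simp
    note frp = fr[OF p]
    have f1: "zu p = a p *\<^sub>R x p" using frp by (rule conjunct1)
    have f2: "zv p = b p *\<^sub>R y p" using frp by blast
    have f3: "n1u p = a p *\<^sub>R (- \<nu> p *\<^sub>R x p + \<beta>1 p *\<^sub>R n2 p)" using frp by blast
    have f4: "n1v p = b p *\<^sub>R (\<nu> p *\<^sub>R y p + \<beta>2 p *\<^sub>R n2 p)" using frp by blast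
    have f5: "n2u p = a p *\<^sub>R (- \<mu> p *\<^sub>R y p - \<beta>1 p *\<^sub>R n1 p)" using frp by blast
    have f6: "n2v p = b p *\<^sub>R (- \<mu> p *\<^sub>R x p - \<beta>2 p *\<^sub>R n1 p)" using frp by blast
    have ap: "a p > 0" and bp: "b p > 0" and mn: "(\<mu> p)\<^sup>2 \<noteq> (\<nu> p)\<^sup>2" using frp by blast+
    have I5: "zuu p \<bullet> zv p + zu p \<bullet> zuv p = 0" using K5[OF p] S0[OF p] by simp
    have A: "(2 * (zuv p \<bullet> zu p)) * (zuv p \<bullet> n2 p)\<^sup>2 / (b p)\<^sup>2
        + (a p)\<^sup>2 * (2 * (zuv p \<bullet> n2 p) * (- (zvv p \<bullet> n2u p) + zuv p \<bullet> n2v p)) / (b p)\<^sup>2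
        - (a p)\<^sup>2 * (zuv p \<bullet> n2 p)\<^sup>2 * (2 * (zvv p \<bullet> zv p)) / ((b p)\<^sup>2)\<^sup>2
        - 2 * (zuu p \<bullet> n1 p) * (- (zuv p \<bullet> n1u p) + zuu p \<bullet> n1v p) = 0"
      by (rule alg_v[OF O[OF p] ap bp f3 f4 f5 f6 f1 f2 N(1-6)[OF p] I5])
    have ee: "zu p \<bullet> zu p = (a p)\<^sup>2" using f1 O[OF p] by (simp add: power2_eq_square)
    have gg: "zv p \<bullet> zv p = (b p)\<^sup>2" using f2 O[OF p] by (simp add: power2_eq_square)
    define \<Phi> where "\<Phi> = (\<lambda>t. (zu (u0,t) \<bullet> zu (u0,t)) * (zuv (u0,t) \<bullet> n2 (u0,t))\<^sup>2 / (zv (u0,t) \<bullet> zv (u0,t))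
        - (zuu (u0,t) \<bullet> n1 (u0,t))\<^sup>2)"
    have gne: "zv (u0,v0) \<bullet> zv (u0,v0) \<noteq> 0" using gg bp pe by simp
    have "(\<Phi> has_real_derivative 0) (at v0)"
      unfolding \<Phi>_def
      apply (rule DERIV_cong[OF DERIV_diff[OF DERIV_divide[OF DERIV_mult[OF de DERIV_power[OF dQ, of 2]] dg gne] DERIV_power[OF dP, of 2]]])
      unfolding pe[symmetric] ee gg
      apply (rule trans[OF _ A])
      using ap bp by (simp add: field_simps power2_eq_square)
    moreover have "\<Phi> v0 \<noteq> 0"
      using ap bp mn unfolding \<Phi>_def pe[symmetric] ee gg N(1)[OF p] N(2)[OF p]
      by (simp add: field_simps power2_eq_square)
    ultimately have D0: "((\<lambda>s. sqrt (sqrt ((\<Phi> s)\<^sup>2))) has_real_derivative 0) (at v0)"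
      by (rule sqrt_sqrt_deriv)
    have "((\<lambda>t. fundE z (u0, t) * sqrt \<bar>(\<mu> (u0, t))\<^sup>2 - (\<nu> (u0, t))\<^sup>2\<bar>) has_real_derivative 0) (at v0)"
    proof (rule has_field_derivative_transform_within_open[OF D0 S])
      fix t assume "t \<in> S"
      then have q: "(u0, t) \<in> U" by (simp add: S_def)
      have f1: "zu (u0,t) = a (u0,t) *\<^sub>R x (u0,t)" using fr[OF q] by (rule conjunct1)
      have f2: "zv (u0,t) = b (u0,t) *\<^sub>R y (u0,t)" using fr[OF q] by blast
      have ap: "a (u0,t) > 0" and bp: "b (u0,t) > 0" and fe: "fundE z (u0,t) = (a (u0,t))\<^sup>2" using fr[OF q] by blast+
      have ee: "zu (u0,t) \<bullet> zu (u0,t) = (a (u0,t))\<^sup>2" using f1 O[OF q] by (simp add: power2_eq_square)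
      have gg: "zv (u0,t) \<bullet> zv (u0,t) = (b (u0,t))\<^sup>2" using f2 O[OF q] by (simp add: power2_eq_square)
      show "sqrt (sqrt ((\<Phi> t)\<^sup>2)) = fundE z (u0, t) * sqrt \<bar>(\<mu> (u0, t))\<^sup>2 - (\<nu> (u0, t))\<^sup>2\<bar>"
        unfolding \<Phi>_def ee gg N(1)[OF q] N(2)[OF q] fe by (rule val_v[OF ap bp])
    qed
    then show "((\<lambda>t. fundE z (fst p, t) * sqrt \<bar>(\<mu> (fst p, t))\<^sup>2 - (\<nu> (fst p, t))\<^sup>2\<bar>)
                    has_real_derivative 0) (at (snd p))" using pe by simp
  qed
  have C2: "\<forall>p\<in>U. ((\<lambda>t. fundG z (t, snd p) * sqrt \<bar>(\<mu> (t, snd p))\<^sup>2 - (\<nu> (t, snd p))\<^sup>2\<bar>)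
                    has_real_derivative 0) (at (fst p))"
  proof
    fix p assume p: "p \<in> U"
    obtain u0 v0 where pe: "p = (u0, v0)" by (cases p)
    have p': "(u0, v0) \<in> U" using p pe by simp
    define S where "S = {t. (t, v0) \<in> U}"
    have S: "open S" "u0 \<in> S" using open_line_u[OF U] p' S_def by auto
    have vzu: "((\<lambda>t. zu (t,v0)) has_vector_derivative zuu p) (at u0)"
      using partial_u[OF dzu[rule_format, OF p']] pe by simp
    have vzv: "((\<lambda>t. zv (t,v0)) has_vector_derivative zvu p) (at u0)"
      using partial_u[OF dzv[rule_format, OF p']] pe by simp
    have vzvv: "((\<lambda>t. zvv (t,v0)) has_vector_derivative zvvu p) (at u0)"
      using partial_u[OF dzvv[rule_format, OF p']] pe by simp
    have vzuv: "((\<lambda>t. zuv (t,v0)) has_vector_derivative zuvu p) (at u0)"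
      using partial_u[OF dzuv[rule_format, OF p']] pe by simp
    have vn1: "((\<lambda>t. n1 (t,v0)) has_vector_derivative n1u p) (at u0)"
      using partial_u[OF dn1[rule_format, OF p']] pe by simp
    have vn2: "((\<lambda>t. n2 (t,v0)) has_vector_derivative n2u p) (at u0)"
      using partial_u[OF dn2[rule_format, OF p']] pe by simp
    have de: "((\<lambda>t. zu (t,v0) \<bullet> zu (t,v0)) has_real_derivative 2 * (zuu p \<bullet> zu p)) (at u0)"
      using vd_inner[OF vzu vzu] pe by (simp add: inner_commute)
    have dg: "((\<lambda>t. zv (t,v0) \<bullet> zv (t,v0)) has_real_derivative 2 * (zuv p \<bullet> zv p)) (at u0)"
      using vd_inner[OF vzv vzv] pe S0[OF p] by (simp add: inner_commute)
    have "zvvu p \<bullet> n1 p = - (zuv p \<bullet> n1v p)" using S3[OF p] S2[OF p] K6[OF p] by simp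
    then have dR: "((\<lambda>t. zvv (t,v0) \<bullet> n1 (t,v0)) has_real_derivative - (zuv p \<bullet> n1v p) + zvv p \<bullet> n1u p) (at u0)"
      using vd_inner[OF vzvv vn1] pe by simp
    have "zuvu p \<bullet> n2 p = - (zuu p \<bullet> n2v p)" using S1[OF p] K8[OF p] by simp
    then have dQ: "((\<lambda>t. zuv (t,v0) \<bullet> n2 (t,v0)) has_real_derivative - (zuu p \<bullet> n2v p) + zuv p \<bullet> n2u p) (at u0)"
      using vd_inner[OF vzuv vn2] pe by simp
    note frp = fr[OF p]
    have f1: "zu p = a p *\<^sub>R x p" using frp by (rule conjunct1)
    have f2: "zv p = b p *\<^sub>R y p" using frp by blast
    have f3: "n1u p = a p *\<^sub>R (- \<nu> p *\<^sub>R x p + \<beta>1 p *\<^sub>R n2 p)" using frp by blast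
    have f4: "n1v p = b p *\<^sub>R (\<nu> p *\<^sub>R y p + \<beta>2 p *\<^sub>R n2 p)" using frp by blast
    have f5: "n2u p = a p *\<^sub>R (- \<mu> p *\<^sub>R y p - \<beta>1 p *\<^sub>R n1 p)" using frp by blast
    have f6: "n2v p = b p *\<^sub>R (- \<mu> p *\<^sub>R x p - \<beta>2 p *\<^sub>R n1 p)" using frp by blast
    have ap: "a p > 0" and bp: "b p > 0" and mn: "(\<mu> p)\<^sup>2 \<noteq> (\<nu> p)\<^sup>2" using frp by blast+
    have I5: "zvv p \<bullet> zu p + zv p \<bullet> zuv p = 0" using K5[OF p] by (simp add: inner_commute)
    have A: "(2 * (zuv p \<bullet> zv p)) * (zuv p \<bullet> n2 p)\<^sup>2 / (a p)\<^sup>2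
        + (b p)\<^sup>2 * (2 * (zuv p \<bullet> n2 p) * (- (zuu p \<bullet> n2v p) + zuv p \<bullet> n2u p)) / (a p)\<^sup>2
        - (b p)\<^sup>2 * (zuv p \<bullet> n2 p)\<^sup>2 * (2 * (zuu p \<bullet> zu p)) / ((a p)\<^sup>2)\<^sup>2
        - 2 * (zvv p \<bullet> n1 p) * (- (zuv p \<bullet> n1v p) + zvv p \<bullet> n1u p) = 0"
      by (rule alg_u[OF O[OF p] ap bp f3 f4 f5 f6 f1 f2 N(1-6)[OF p] I5])
    have ee: "zu p \<bullet> zu p = (a p)\<^sup>2" using f1 O[OF p] by (simp add: power2_eq_square)
    have gg: "zv p \<bullet> zv p = (b p)\<^sup>2" using f2 O[OF p] by (simp add: power2_eq_square)
    define \<Phi> where "\<Phi> = (\<lambda>t. (zv (t,v0) \<bullet> zv (t,v0)) * (zuv (t,v0) \<bullet> n2 (t,v0))\<^sup>2 / (zu (t,v0) \<bullet> zu (t,v0))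
        - (zvv (t,v0) \<bullet> n1 (t,v0))\<^sup>2)"
    have ene: "zu (u0,v0) \<bullet> zu (u0,v0) \<noteq> 0" using ee ap pe by simp
    have "(\<Phi> has_real_derivative 0) (at u0)"
      unfolding \<Phi>_def
      apply (rule DERIV_cong[OF DERIV_diff[OF DERIV_divide[OF DERIV_mult[OF dg DERIV_power[OF dQ, of 2]] de ene] DERIV_power[OF dR, of 2]]])
      unfolding pe[symmetric] ee gg
      apply (rule trans[OF _ A])
      using ap bp by (simp add: field_simps power2_eq_square)
    moreover have "\<Phi> u0 \<noteq> 0"
      using ap bp mn unfolding \<Phi>_def pe[symmetric] ee gg N(5)[OF p] N(2)[OF p]
      by (simp add: field_simps power2_eq_square)
    ultimately have D0: "((\<lambda>s. sqrt (sqrt ((\<Phi> s)\<^sup>2))) has_real_derivative 0) (at u0)"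
      by (rule sqrt_sqrt_deriv)
    have "((\<lambda>t. fundG z (t, v0) * sqrt \<bar>(\<mu> (t, v0))\<^sup>2 - (\<nu> (t, v0))\<^sup>2\<bar>) has_real_derivative 0) (at u0)"
    proof (rule has_field_derivative_transform_within_open[OF D0 S])
      fix t assume "t \<in> S"
      then have q: "(t, v0) \<in> U" by (simp add: S_def)
      have f1: "zu (t,v0) = a (t,v0) *\<^sub>R x (t,v0)" using fr[OF q] by (rule conjunct1)
      have f2: "zv (t,v0) = b (t,v0) *\<^sub>R y (t,v0)" using fr[OF q] by blast
      have ap: "a (t,v0) > 0" and bp: "b (t,v0) > 0" and fg: "fundG z (t,v0) = (b (t,v0))\<^sup>2" using fr[OF q] by blast+
      have ee: "zu (t,v0) \<bullet> zu (t,v0) = (a (t,v0))\<^sup>2" using f1 O[OF q] by (simp add: power2_eq_square)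
      have gg: "zv (t,v0) \<bullet> zv (t,v0) = (b (t,v0))\<^sup>2" using f2 O[OF q] by (simp add: power2_eq_square)
      show "sqrt (sqrt ((\<Phi> t)\<^sup>2)) = fundG z (t, v0) * sqrt \<bar>(\<mu> (t, v0))\<^sup>2 - (\<nu> (t, v0))\<^sup>2\<bar>"
        unfolding \<Phi>_def ee gg N(5)[OF q] N(2)[OF q] fg by (rule val_u[OF ap bp])
    qed
    then show "((\<lambda>t. fundG z (t, snd p) * sqrt \<bar>(\<mu> (t, snd p))\<^sup>2 - (\<nu> (t, snd p))\<^sup>2\<bar>)
                    has_real_derivative 0) (at (fst p))" using pe by simp
  qed
  show ?thesis using C1 C2 by blast
qed

end
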